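(* Let $r\geq 1$, let $\mathbf a=(a_1,\ldots,a_r)$ be positive integers, and let $D$ be a positive common multiple of $a_1,\ldots,a_r$. Then for every integer $n\geq 0$, $$p_{\mathbf a}(n) = \sum_{j=0}^{\lfloor n/D\rfloor} \binom{r+j-1}{j} f_{\mathbf a}(n-jD).$$
   Context: $p_{\mathbf a}(n)$ is the restricted partition function: the number of integer solutions $(x_1,\ldots,x_r)$ of $a_1x_1+\cdots+a_rx_r=n$ with all $x_i\geq 0$. For $n\geq 0$, $f_{\mathbf a}(n)$ denotes the number of integer tuples $(j_1,\ldots,j_r)$ with $a_1j_1+\cdots+a_rj_r=n$ and $0\leq j_k\leq \frac{D}{a_k}-1$ for $1\leq k\leq r$. *)

theory Defs
  imports Complex_Main
begin

definition restricted_partition :: "nat list \<Rightarrow> nat \<Rightarrow> nat" where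
  "restricted_partition a n =
     card {x :: nat list. length x = length a \<and>
                          (\<Sum>k<length a. a ! k * x ! k) = n}"

definition f_count :: "nat list \<Rightarrow> nat \<Rightarrow> nat \<Rightarrow> nat" where
  "f_count a D n =
     card {j :: nat list. length j = length a \<and>
                          (\<Sum>k<length a. a ! k * j ! k) = n \<and>
                          (\<forall>k<length a. real (j ! k) \<le> real D / real (a ! k) - 1)}"

end

theory Submission
  imports Defs
begin

lemma cond_iff:
  fixes c D j :: nat
  assumes "c > 0" "c dvd D" "D > 0"
  shows "(real j \<le> real D / real c - 1) = (j < D div c)"
proof -
  obtain b where b: "D = c * b" using assms by (auto elim: dvdE)
  have "real D / real c = real b" using b assms by simp
  moreover have "D div c = b" using b assms by simp
  ultimately show ?thesis by linarith
qed

theorem proposition2p2: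
  fixes a :: "nat list" and D n :: nat
  assumes "length a \<ge> 1"
    and "\<forall>k<length a. a ! k > 0"
    and "D > 0"
    and "\<forall>k<length a. a ! k dvd D"
  shows "restricted_partition a n =
         (\<Sum>j = 0..n div D. (length a + j - 1 choose j) * f_count a D (n - j * D))"
proof -
  define r where "r = length a"
  define b where "b k = D div (a ! k)" for k
  have ab: "a ! k * b k = D" if "k < r" for k
    using assms(2,4) that unfolding b_def r_def by simp
  have bpos: "b k > 0" if "k < r" for k
    using ab[OF that] assms(3) by (cases "b k") auto
  define S where "S m = {q :: nat list. length q = r \<and> sum_list q = m}" for m
  define F where "F m = {j :: nat list. length j = r \<and>
                          (\<Sum>k<r. a ! k * j ! k) = m \<and> (\<forall>k<r. j ! k < b k)}" for m
  define A where "A = {x :: nat list. length x = r \<and> (\<Sum>k<r. a ! k * x ! k) = n}"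
  have Fc: "f_count a D m = card (F m)" for m
  proof -
    have "{j :: nat list. length j = length a \<and>
                          (\<Sum>k<length a. a ! k * j ! k) = m \<and>
                          (\<forall>k<length a. real (j ! k) \<le> real D / real (a ! k) - 1)} = F m"
      using cond_iff assms(2,3,4) unfolding F_def r_def b_def by auto
    thus ?thesis unfolding f_count_def by simp
  qed
  have Sc: "card (S m) = (r + m - 1 choose m)" for m
    unfolding S_def using card_length_sum_list[of r m] by (simp add: add.commute)
  have finS: "finite (S m)" for m
    by (rule finite_subset[of _ "{xs. set xs \<subseteq> {0..m} \<and> length xs = r}"])
       (auto simp: S_def member_le_sum_list intro: finite_lists_length_eq)
  have finF: "finite (F m)" for m
  proof (rule finite_subset[of _ "{xs. set xs \<subseteq> {0..Max (b ` {..<r})} \<and> length xs = r}"])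
    show "F m \<subseteq> {xs. set xs \<subseteq> {0..Max (b ` {..<r})} \<and> length xs = r}"
    proof
      fix xs assume "xs \<in> F m"
      hence L: "length xs = r" and B: "\<forall>k<r. xs ! k < b k" by (auto simp: F_def)
      have "set xs \<subseteq> {0..Max (b ` {..<r})}"
      proof
        fix y assume "y \<in> set xs"
        then obtain k where k: "k < r" "y = xs ! k" using L by (auto simp: in_set_conv_nth)
        have bm: "b k \<le> Max (b ` {..<r})" using k by (intro Max_ge) auto
        have "xs ! k < b k" using B k by auto
        then have "y \<le> Max (b ` {..<r})" using k bm by linarith
        then show "y \<in> {0..Max (b ` {..<r})}" by simp
      qed
      thus "xs \<in> {xs. set xs \<subseteq> {0..Max (b ` {..<r})} \<and> length xs = r}" using L by simp
    qed
  qed (intro finite_lists_length_eq, simp)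
  define X where "X = Sigma {0..n div D} (\<lambda>m. S m \<times> F (n - m * D))"
  define \<psi> where "\<psi> = (\<lambda>(m::nat, q::nat list, j::nat list). map (\<lambda>k. q ! k * b k + j ! k) [0..<r])"
  have sumq: "sum_list q = (\<Sum>k<r. q ! k)" if "length q = r" for q :: "nat list"
    using that by (simp add: sum_list_sum_nth atLeast0LessThan)
  have inj: "inj_on \<psi> X"
  proof (rule inj_onI)
    fix u v assume u: "u \<in> X" and v: "v \<in> X" and e: "\<psi> u = \<psi> v"
    obtain m q j where uu: "u = (m, q, j)" by (cases u) auto
    obtain m' q' j' where vv: "v = (m', q', j')" by (cases v) auto
    have lq: "length q = r" "length j = r" "sum_list q = m" "\<forall>k<r. j ! k < b k"
      using u uu by (auto simp: X_def S_def F_def)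
    have lq': "length q' = r" "length j' = r" "sum_list q' = m'" "\<forall>k<r. j' ! k < b k"
      using v vv by (auto simp: X_def S_def F_def)
    have c: "q ! k * b k + j ! k = q' ! k * b k + j' ! k" if "k < r" for k
    proof -
      have "\<psi> u ! k = \<psi> v ! k" using e by simp
      thus ?thesis using that by (simp add: \<psi>_def uu vv)
    qed
    have qk: "q ! k = q' ! k" and jk: "j ! k = j' ! k" if "k < r" for k
    proof -
      have "(q ! k * b k + j ! k) div b k = (q' ! k * b k + j' ! k) div b k" using c that by simp
      thus "q ! k = q' ! k" using lq(4) lq'(4) that bpos[OF that] by simp
      have "(q ! k * b k + j ! k) mod b k = (q' ! k * b k + j' ! k) mod b k" using c that by simp
      thus "j ! k = j' ! k" using lq(4) lq'(4) that bpos[OF that] by simp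
    qed
    have "q = q'" using lq lq' qk by (intro nth_equalityI) auto
    moreover have "j = j'" using lq lq' jk by (intro nth_equalityI) auto
    ultimately show "u = v" using uu vv lq lq' by simp
  qed
  have img: "\<psi> ` X = A"
  proof
    show "\<psi> ` X \<subseteq> A"
    proof
      fix y assume "y \<in> \<psi> ` X"
      then obtain m q j where mem: "(m, q, j) \<in> X" and y: "y = \<psi> (m, q, j)" by auto
      have lq: "length q = r" "length j = r" "sum_list q = m"
        "(\<Sum>k<r. a ! k * j ! k) = n - m * D" "m \<le> n div D"
        using mem by (auto simp: X_def S_def F_def)
      have mD: "m * D \<le> n" using lq(5) div_times_less_eq_dividend le_trans mult_le_mono1 by blast
      have "(\<Sum>k<r. a ! k * y ! k) = (\<Sum>k<r. D * q ! k + a ! k * j ! k)"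
        by (rule sum.cong) (auto simp: y \<psi>_def algebra_simps ab[symmetric])
      also have "\<dots> = D * m + (n - m * D)"
        using lq by (simp add: sum.distrib sum_distrib_left[symmetric] sumq)
      also have "\<dots> = n" using mD by (simp add: mult.commute)
      finally show "y \<in> A" by (simp add: A_def y \<psi>_def)
    qed
    show "A \<subseteq> \<psi> ` X"
    proof
      fix x assume "x \<in> A"
      hence lx: "length x = r" and sx: "(\<Sum>k<r. a ! k * x ! k) = n" by (auto simp: A_def)
      define q where "q = map (\<lambda>k. x ! k div b k) [0..<r]"
      define j where "j = map (\<lambda>k. x ! k mod b k) [0..<r]"
      define m where "m = sum_list q"
      have xs: "x ! k = q ! k * b k + j ! k" if "k < r" for k
        using that by (simp add: q_def j_def)
      have "n = (\<Sum>k<r. D * q ! k + a ! k * j ! k)"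
        unfolding sx[symmetric]
        by (rule sum.cong) (auto simp: xs algebra_simps ab[symmetric])
      also have "\<dots> = D * m + (\<Sum>k<r. a ! k * j ! k)"
        by (simp add: sum.distrib sum_distrib_left[symmetric] sumq m_def q_def)
      finally have n_eq: "n = D * m + (\<Sum>k<r. a ! k * j ! k)" .
      have mle: "m \<le> n div D"
        using n_eq assms(3) by (metis div_le_mono le_add1 nonzero_mult_div_cancel_left not_gr0)
      have "(m, q, j) \<in> X"
        unfolding X_def S_def F_def using mle n_eq bpos
        by (auto simp: q_def j_def m_def mult.commute)
      moreover have "x = \<psi> (m, q, j)"
        using lx xs by (intro nth_equalityI) (auto simp: \<psi>_def)
      ultimately show "x \<in> \<psi> ` X" by blast
    qed
  qed
  have "restricted_partition a n = card A"
    unfolding restricted_partition_def A_def r_def by simp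
  also have "\<dots> = card X" using card_image[OF inj] img by simp
  also have "\<dots> = (\<Sum>m = 0..n div D. card (S m \<times> F (n - m * D)))"
    unfolding X_def using finS finF by (subst card_SigmaI) auto
  also have "\<dots> = (\<Sum>m = 0..n div D. (length a + m - 1 choose m) * f_count a D (n - m * D))"
    by (rule sum.cong) (auto simp: card_cartesian_product Sc Fc r_def)
  finally show ?thesis .
qed

end
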